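(* Let $b>a>0$ and define $g_{a,b}:\mathbb{R}\to(0,\infty)$ by $g_{a,b}(t)=\frac{b^t-a^t}{t}$ for $t\neq0$ and $g_{a,b}(0)=b-a$. Then: (i) $g_{a,b}$ is logarithmically convex on $(-\infty,\infty)$, i.e. $[\ln g_{a,b}(t)]''\ge 0$ for all $t\in\mathbb{R}$; (ii) $g_{a,b}$ is $3$-log-convex on $(-\infty,0)$ and $3$-log-concave on $(0,\infty)$, i.e. $[\ln g_{a,b}(t)]'''\ge0$ for $t<0$ and $[\ln g_{a,b}(t)]'''\le0$ for $t>0$; (iii) the function $$h_{a,b}(t)=\begin{cases}\dfrac{b^t\ln b-a^t\ln a}{b^t-a^t}-\dfrac1t,& t\neq0,\\[0.5em] \ln\sqrt{ab},& t=0\end{cases}$$ (which equals $[\ln g_{a,b}(t)]'$) is increasing on $(-\infty,\infty)$ and satisfies $\lim_{t\to-\infty}h_{a,b}(t)=\ln a$ and $\lim_{t\to\infty}h_{a,b}(t)=\ln b$.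
   Context: A $k$-times differentiable function $f>0$ on an interval $I$ is called $k$-log-convex on $I$ if $[\ln f(t)]^{(k)}\ge0$ on $I$, and $k$-log-concave on $I$ if $[\ln f(t)]^{(k)}\le0$ on $I$. Logarithmic convexity means $2$-log-convexity. *)

theory Defs
  imports "HOL-Analysis.Analysis"
begin

definition k_times_differentiable_on :: "nat \<Rightarrow> (real \<Rightarrow> real) \<Rightarrow> real set \<Rightarrow> bool" where
  "k_times_differentiable_on k f I \<longleftrightarrow>
     (\<forall>j<k. \<forall>t\<in>I. (deriv ^^ j) f differentiable (at t))"

definition k_log_convex :: "nat \<Rightarrow> (real \<Rightarrow> real) \<Rightarrow> real set \<Rightarrow> bool" where
  "k_log_convex k f I \<longleftrightarrow> (\<forall>t\<in>I. f t > 0) \<and> k_times_differentiable_on k f I \<and>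
     (\<forall>t\<in>I. (deriv ^^ k) (\<lambda>s. ln (f s)) t \<ge> 0)"

definition k_log_concave :: "nat \<Rightarrow> (real \<Rightarrow> real) \<Rightarrow> real set \<Rightarrow> bool" where
  "k_log_concave k f I \<longleftrightarrow> (\<forall>t\<in>I. f t > 0) \<and> k_times_differentiable_on k f I \<and>
     (\<forall>t\<in>I. (deriv ^^ k) (\<lambda>s. ln (f s)) t \<le> 0)"

text \<open>g_{a,b}; the value at 0 is the continuous extension ln b - ln a.\<close>
definition g_ab :: "real \<Rightarrow> real \<Rightarrow> real \<Rightarrow> real" where
  "g_ab a b t = (if t = 0 then ln b - ln a else (b powr t - a powr t) / t)"

definition h_ab :: "real \<Rightarrow> real \<Rightarrow> real \<Rightarrow> real" where
  "h_ab a b t = (if t = 0 then ln (sqrt (a * b))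
     else (b powr t * ln b - a powr t * ln a) / (b powr t - a powr t) - 1 / t)"

end

theory Submission
  imports Defs "HOL-Real_Asymp.Real_Asymp"
begin



lemma hyp_main:
  fixes v :: real
  defines "s \<equiv> exp (ln (cosh v) / 3)"
  shows "(0 \<le> v \<longrightarrow> v * s \<le> sinh v) \<and> (v \<le> 0 \<longrightarrow> sinh v \<le> v * s)"
proof -
  define S where "S = (\<lambda>x::real. exp (ln (cosh x) / 3))"
  define p where "p = (\<lambda>x. sinh x / S x - x)"
  have Spos: "S x > 0" for x unfolding S_def by simp
  have S3: "S x ^ 3 = cosh x" for x
  proof -
    have "S x ^ 3 = exp (3 * (ln (cosh x) / 3))" unfolding S_def by (subst exp_of_nat_mult[symmetric]) simp
    also have "\<dots> = cosh x" by simp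
    finally show ?thesis .
  qed
  have dS: "(S has_real_derivative S x * (sinh x / cosh x) / 3) (at x)" for x
    unfolding S_def
    by (rule derivative_eq_intros refl | simp)+
  have dp: "(p has_real_derivative ((cosh x * S x - sinh x * (S x * (sinh x / cosh x) / 3)) / (S x)^2 - 1)) (at x)" for x
    unfolding p_def
    apply (rule derivative_eq_intros dS refl | simp add: Spos[THEN less_imp_neq, symmetric])+
    apply (simp add: power2_eq_square)
    done
  have nn: "0 \<le> (cosh x * S x - sinh x * (S x * (sinh x / cosh x) / 3)) / (S x)^2 - 1" for x
  proof -
    have c: "cosh x > 0" by simp
    let ?s = "S x"
    have eq: "(cosh x * ?s - sinh x * (?s * (sinh x / cosh x) / 3)) / ?s^2 - 1
        = (2 * ?s^6 - 3 * ?s^4 + 1) / (3 * ?s^4)"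
    proof -
      have sh: "sinh x ^ 2 = cosh x ^ 2 - 1" using cosh_square_eq[of x] by simp
      have "(cosh x * ?s - sinh x * (?s * (sinh x / cosh x) / 3)) / ?s^2 - 1
          = (3 * cosh x ^ 2 - sinh x ^ 2) / (3 * cosh x * ?s) - 1"
        using c Spos[of x] by (simp add: field_simps power2_eq_square)
      also have "\<dots> = (2 * cosh x ^ 2 + 1) / (3 * cosh x * ?s) - 1" by (simp add: sh)
      also have "\<dots> = (2 * ?s^6 - 3 * ?s^4 + 1) / (3 * ?s^4)"
        using Spos[of x] unfolding S3[symmetric] by (simp add: field_simps, algebra)
      finally show ?thesis .
    qed
    have "0 \<le> 2 * ?s^6 - 3 * ?s^4 + 1"
    proof -
      have "2 * ?s^6 - 3 * ?s^4 + 1 = (?s^2 - 1)^2 * (2 * ?s^2 + 1)" by algebra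
      thus ?thesis by simp
    qed
    thus ?thesis unfolding eq using Spos[of x] by simp
  qed
  have p0: "p 0 = 0" unfolding p_def by simp
  have mono: "x \<le> y \<Longrightarrow> p x \<le> p y" for x y
    by (rule DERIV_nonneg_imp_nondecreasing) (use dp nn in blast)+
  have s_eq: "s = S v" unfolding s_def S_def ..
  show ?thesis
  proof (intro conjI impI)
    assume "0 \<le> v" then have "p 0 \<le> p v" by (rule mono)
    thus "v * s \<le> sinh v" unfolding p0 p_def s_eq using Spos[of v] by (simp add: field_simps)
  next
    assume "v \<le> 0" then have "p v \<le> p 0" by (rule mono)
    thus "sinh v \<le> v * s" unfolding p0 p_def s_eq using Spos[of v] by (simp add: field_simps)
  qed
qed




lemma sinh_cube:
  fixes v :: real
  shows "(0 \<le> v \<longrightarrow> v^3 * cosh v \<le> sinh v ^ 3) \<and> (v \<le> 0 \<longrightarrow> sinh v ^ 3 \<le> v^3 * cosh v)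
    \<and> v^2 \<le> sinh v ^ 2"
proof -
  define s where "s = exp (ln (cosh v) / 3)"
  have s3: "s ^ 3 = cosh v"
  proof -
    have "s ^ 3 = exp (3 * (ln (cosh v) / 3))" unfolding s_def by (subst exp_of_nat_mult[symmetric]) simp
    also have "\<dots> = cosh v" by simp
    finally show ?thesis .
  qed
  have s1: "s \<ge> 1" unfolding s_def using cosh_real_ge_1[of v] by simp
  note H = hyp_main[of v, folded s_def]
  have a: "0 \<le> v \<Longrightarrow> v^3 * cosh v \<le> sinh v ^ 3"
    using power_mono_odd[of 3 "v * s" "sinh v"] H by (simp add: power_mult_distrib s3)
  have b: "v \<le> 0 \<Longrightarrow> sinh v ^ 3 \<le> v^3 * cosh v"
    using power_mono_odd[of 3 "sinh v" "v * s"] H by (simp add: power_mult_distrib s3)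
  have c: "v^2 \<le> sinh v ^ 2"
  proof (cases "0 \<le> v")
    case True
    have "v \<le> v * s" using True s1 by (simp add: mult_le_cancel_left1)
    hence "v \<le> sinh v" using H True by linarith
    thus ?thesis using True power_mono by blast
  next
    case False
    have "v * s \<le> v" using False s1 by (simp add: mult_le_cancel_left2)
    hence "sinh v \<le> v" using H False by linarith
    hence "(-v)^2 \<le> (- sinh v)^2" using False by (intro power_mono) auto
    thus ?thesis by simp
  qed
  show ?thesis using a b c by blast
qed

lemma exp_ineqs:
  fixes u :: real
  shows "(0 \<le> u \<longrightarrow> u^3 * exp u * (exp u + 1) \<le> 2 * (exp u - 1)^3)
    \<and> (u \<le> 0 \<longrightarrow> 2 * (exp u - 1)^3 \<le> u^3 * exp u * (exp u + 1))
    \<and> u^2 * exp u \<le> (exp u - 1)^2"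
proof -
  define v where "v = u / 2"
  define y where "y = exp v"
  have ypos: "y > 0" unfolding y_def by simp
  have x: "exp u = y^2" unfolding y_def v_def by (simp add: power2_eq_square exp_add[symmetric])
  have sh: "sinh v = (y^2 - 1) / (2*y)" unfolding sinh_field_def y_def
    by (simp add: exp_minus field_simps power2_eq_square)
  have ch: "cosh v = (y^2 + 1) / (2*y)" unfolding cosh_field_def y_def
    by (simp add: exp_minus field_simps power2_eq_square)
  have u: "u = 2 * v" unfolding v_def by simp
  have u3: "u^3 = 8 * v^3" unfolding u by (simp add: power_mult_distrib)
  have u2: "u^2 = 4 * v^2" unfolding u by (simp add: power_mult_distrib)
  have e1: "v^3 * cosh v = (u^3 * exp u * (exp u + 1)) / (16 * y^3)"
    unfolding ch x using ypos u3 by (simp add: field_simps power2_eq_square power3_eq_cube)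
  have e2: "sinh v ^ 3 = (2 * (exp u - 1)^3) / (16 * y^3)"
    unfolding sh x using ypos by (simp add: field_simps power2_eq_square power3_eq_cube)
  have e3: "v^2 = (u^2 * exp u) / (4 * y^2)"
    unfolding x using ypos u2 by (simp add: field_simps power2_eq_square)
  have e4: "sinh v ^ 2 = (exp u - 1)^2 / (4 * y^2)"
    unfolding sh x using ypos by (simp add: field_simps power2_eq_square)
  have p3: "16 * y^3 > 0" "4 * y^2 > 0" using ypos by auto
  note S = sinh_cube[of v]
  show ?thesis
  proof (intro conjI impI)
    assume "0 \<le> u" then have "0 \<le> v" unfolding v_def by simp
    with S have "v^3 * cosh v \<le> sinh v ^ 3" by blast
    thus "u^3 * exp u * (exp u + 1) \<le> 2 * (exp u - 1)^3" unfolding e1 e2 using p3 by (metis divide_le_cancel less_irrefl)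
  next
    assume "u \<le> 0" then have "v \<le> 0" unfolding v_def by simp
    with S have "sinh v ^ 3 \<le> v^3 * cosh v" by blast
    thus "2 * (exp u - 1)^3 \<le> u^3 * exp u * (exp u + 1)" unfolding e1 e2 using p3 by (metis divide_le_cancel less_irrefl)
  next
    from S have "v^2 \<le> sinh v ^ 2" by blast
    thus "u^2 * exp u \<le> (exp u - 1)^2" unfolding e3 e4 using p3 by (metis divide_le_cancel less_irrefl)
  qed
qed




definition E :: "real \<Rightarrow> real" where
  "E u = (if u = 0 then 1 else (exp u - 1) / u)"
definition E1 :: "real \<Rightarrow> real" where
  "E1 u = (if u = 0 then 1/2 else (u * exp u - exp u + 1) / u^2)"
definition E2 :: "real \<Rightarrow> real" where
  "E2 u = (if u = 0 then 1/3 else (u^2 * exp u - 2 * u * exp u + 2 * exp u - 2) / u^3)"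

lemma a1: fixes u X :: real assumes "u \<noteq> 0" shows
 "((X + u*X - X)*u^2 - (u*X - X + 1)*(2*u))/(u^2)^2 = (u^2*X - 2*u*X + 2*X - 2)/u^3"
  using assms by (simp add: field_simps) algebra
lemma a2: fixes u X :: real assumes "u \<noteq> 0" "X - 1 \<noteq> 0" shows
 "((u^2*X - 2*u*X + 2*X - 2)/u^3 * ((X-1)/u) - ((u*X-X+1)/u^2)*((u*X-X+1)/u^2)) / ((X-1)/u)^2 = 1/u^2 - X/(X-1)^2"
  using assms by (simp add: field_simps) algebra
lemma a3: fixes u X :: real assumes "u \<noteq> 0" "X - 1 \<noteq> 0" shows
 "- (2 * u) / (u^2)^2 - (X * (X - 1)^2 - X * (2 * (X - 1) * X)) / ((X - 1)^2)^2 = - 2 / u^3 + X * (X + 1) / (X - 1)^3"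
  using assms by (simp add: field_simps) algebra

lemma ev_ne0: "\<forall>\<^sub>F h in at (0::real). h \<noteq> 0"
  by (simp add: eventually_at_filter)

lemma open_ne: "open (-{0::real})" by auto

lemma E_pos: "E u > 0"
proof (cases "u = 0")
  case False
  show ?thesis
  proof (cases "u > 0")
    case True then have "exp u > 1" by simp
    thus ?thesis using True by (simp add: E_def)
  next
    case f2: False then have "u < 0" using False by simp
    then have "exp u < 1" by simp
    thus ?thesis using \<open>u < 0\<close> by (simp add: E_def divide_neg_neg)
  qed
qed (simp add: E_def)

lemma dE: "(E has_real_derivative E1 u) (at u)"
proof (cases "u = 0")
  case True
  have "((\<lambda>h. (E (0 + h) - E 0) / h) \<longlongrightarrow> 1/2) (at 0)"
  proof (subst tendsto_cong)
    show "\<forall>\<^sub>F h in at 0. (E (0 + h) - E 0) / h = ((exp h - 1)/h - 1)/h"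
      using ev_ne0 by eventually_elim (simp add: E_def)
    show "((\<lambda>u::real. ((exp u - 1)/u - 1)/u) \<longlongrightarrow> 1/2) (at 0)" by real_asymp
  qed
  thus ?thesis using True by (simp add: DERIV_def E1_def)
next
  case False
  have "((\<lambda>x. (exp x - 1) / x) has_real_derivative (exp u * u - (exp u - 1)) / u^2) (at u)"
    using False by (auto intro!: derivative_eq_intros simp: power2_eq_square)
  then have "((\<lambda>x. (exp x - 1) / x) has_real_derivative E1 u) (at u)"
    using False by (simp add: E1_def algebra_simps)
  thus ?thesis
    by (rule has_field_derivative_transform_within_open[OF _ open_ne]) (use False in \<open>auto simp: E_def\<close>)
qed

lemma dE1: "(E1 has_real_derivative E2 u) (at u)"
proof (cases "u = 0")
  case True
  have "((\<lambda>h. (E1 (0 + h) - E1 0) / h) \<longlongrightarrow> 1/3) (at 0)"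
  proof (subst tendsto_cong)
    show "\<forall>\<^sub>F h in at 0. (E1 (0 + h) - E1 0) / h = ((h*exp h - exp h + 1)/h^2 - 1/2)/h"
      using ev_ne0 by eventually_elim (simp add: E1_def)
    show "((\<lambda>u::real. ((u*exp u - exp u + 1)/u^2 - 1/2)/u) \<longlongrightarrow> 1/3) (at 0)" by real_asymp
  qed
  thus ?thesis using True by (simp add: DERIV_def E2_def)
next
  case False
  have "((\<lambda>x. (x * exp x - exp x + 1) / x^2) has_real_derivative
      ((exp u + u * exp u - exp u) * u^2 - (u * exp u - exp u + 1) * (2 * u)) / (u^2)^2) (at u)"
    using False by (auto intro!: derivative_eq_intros simp: power2_eq_square)
  moreover have "((exp u + u * exp u - exp u) * u^2 - (u * exp u - exp u + 1) * (2 * u)) / (u^2)^2 = E2 u"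
    unfolding E2_def using False a1[OF False, of "exp u"] by simp
  ultimately have "((\<lambda>x. (x * exp x - exp x + 1) / x^2) has_real_derivative E2 u) (at u)"
    by metis
  thus ?thesis
    by (rule has_field_derivative_transform_within_open[OF _ open_ne]) (use False in \<open>auto simp: E1_def\<close>)
qed

lemma E2_diff: "u \<noteq> 0 \<Longrightarrow> E2 differentiable (at u)"
proof -
  assume u: "u \<noteq> 0"
  have "((\<lambda>x. (x^2 * exp x - 2 * x * exp x + 2 * exp x - 2) / x^3) has_real_derivative
      ((2*u*exp u + u^2 * exp u - (2 * exp u + 2 * u * exp u) + 2 * exp u) * u^3
        - (u^2 * exp u - 2 * u * exp u + 2 * exp u - 2) * (3 * u^2)) / (u^3)^2) (at u)"
    using u by (auto intro!: derivative_eq_intros simp: power2_eq_square power3_eq_cube)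
  then have "(E2 has_real_derivative
      ((2*u*exp u + u^2 * exp u - (2 * exp u + 2 * u * exp u) + 2 * exp u) * u^3
        - (u^2 * exp u - 2 * u * exp u + 2 * exp u - 2) * (3 * u^2)) / (u^3)^2) (at u)"
    by (rule has_field_derivative_transform_within_open[OF _ open_ne]) (use u in \<open>auto simp: E2_def\<close>)
  thus ?thesis unfolding real_differentiable_def by blast
qed

definition K :: "real \<Rightarrow> real" where "K u = E1 u / E u"
definition K1 :: "real \<Rightarrow> real" where "K1 u = (E2 u * E u - E1 u * E1 u) / (E u)^2"
definition K2 :: "real \<Rightarrow> real" where "K2 u = - 2 / u^3 + exp u * (exp u + 1) / (exp u - 1)^3"

lemma dK: "(K has_real_derivative K1 u) (at u)"
proof -
  have "((\<lambda>x. E1 x / E x) has_real_derivative (E2 u * E u - E1 u * E1 u) / (E u * E u)) (at u)"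
    by (rule DERIV_divide[OF dE1 dE]) (use E_pos[of u] in simp)
  thus ?thesis unfolding K_def[abs_def] K1_def by (simp add: power2_eq_square)
qed

lemma exp_ne1: "u \<noteq> 0 \<Longrightarrow> exp u - 1 \<noteq> (0::real)" by simp

lemma K1_closed: "u \<noteq> 0 \<Longrightarrow> K1 u = 1 / u^2 - exp u / (exp u - 1)^2"
  using exp_ne1[of u] a2[of u "exp u"]
  by (simp add: K1_def E_def E1_def E2_def power2_eq_square)

lemma dK1: "u \<noteq> 0 \<Longrightarrow> (K1 has_real_derivative K2 u) (at u)"
proof -
  assume u: "u \<noteq> 0"
  have "((\<lambda>x. 1 / x^2 - exp x / (exp x - 1)^2) has_real_derivative
     - (2 * u) / (u^2)^2 - (exp u * (exp u - 1)^2 - exp u * (2 * (exp u - 1) * exp u)) / ((exp u - 1)^2)^2) (at u)"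
    using u exp_ne1[of u] by (auto intro!: derivative_eq_intros simp: power2_eq_square)
  moreover have "- (2 * u) / (u^2)^2 - (exp u * (exp u - 1)^2 - exp u * (2 * (exp u - 1) * exp u)) / ((exp u - 1)^2)^2 = K2 u"
    unfolding K2_def by (rule a3[OF u exp_ne1[OF u]])
  ultimately have "((\<lambda>x. 1 / x^2 - exp x / (exp x - 1)^2) has_real_derivative K2 u) (at u)"
    by metis
  thus ?thesis
    by (rule has_field_derivative_transform_within_open[OF _ open_ne]) (use u in \<open>auto simp: K1_closed\<close>)
qed




lemma K1_nonneg: "K1 u \<ge> 0"
proof (cases "u = 0")
  case True thus ?thesis by (simp add: K1_def E_def E1_def E2_def)
next
  case False
  have i: "u^2 * exp u \<le> (exp u - 1)^2" using exp_ineqs[of u] by blast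
  have p1: "(exp u - 1)^2 > 0" using exp_ne1[OF False] by simp
  have p2: "u^2 > 0" using False by simp
  have "exp u / (exp u - 1)^2 \<le> 1 / u^2"
    using i p1 p2 by (simp add: divide_simps mult.commute)
  thus ?thesis using K1_closed[OF False] by simp
qed

lemma K2_pos: "u > 0 \<Longrightarrow> K2 u \<le> 0"
proof -
  assume u: "u > 0"
  have i: "u^3 * exp u * (exp u + 1) \<le> 2 * (exp u - 1)^3" using exp_ineqs[of u] u by auto
  have p1: "(exp u - 1)^3 > 0" using u by simp
  have p2: "u^3 > 0" using u by simp
  have "exp u * (exp u + 1) / (exp u - 1)^3 \<le> 2 / u^3"
    using i p1 p2 by (simp add: divide_simps mult.commute mult.left_commute)
  thus ?thesis unfolding K2_def by simp
qed

lemma K2_neg: "u < 0 \<Longrightarrow> K2 u \<ge> 0"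
proof -
  assume u: "u < 0"
  have i: "2 * (exp u - 1)^3 \<le> u^3 * exp u * (exp u + 1)" using exp_ineqs[of u] u by auto
  have p1: "(exp u - 1)^3 < 0" using u by (simp add: power3_eq_cube mult_pos_neg mult_neg_neg)
  have p2: "u^3 < 0" using u by (simp add: power3_eq_cube mult_pos_neg mult_neg_neg)
  have "2 / u^3 \<le> exp u * (exp u + 1) / (exp u - 1)^3"
    using i p1 p2 by (simp add: divide_simps mult.commute mult.left_commute)
  thus ?thesis unfolding K2_def by simp
qed

lemma K_closed: "u \<noteq> 0 \<Longrightarrow> K u = 1 / (1 - exp (- u)) - 1 / u"
proof -
  assume u: "u \<noteq> 0"
  have x: "exp u - 1 \<noteq> 0" "1 - exp (-u) \<noteq> 0" using u by auto
  have "1 / (1 - exp (- u)) = exp u / (exp u - 1)"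
    using x by (simp add: exp_minus field_simps)
  thus ?thesis using u x by (simp add: K_def E_def E1_def field_simps power2_eq_square)
qed

lemma K_mono: "x \<le> y \<Longrightarrow> K x \<le> K y"
  by (rule DERIV_nonneg_imp_nondecreasing) (use dK K1_nonneg in blast)+

lemma K_top: "(K \<longlongrightarrow> 1) at_top"
proof (subst tendsto_cong)
  show "\<forall>\<^sub>F u in at_top. K u = 1 / (1 - exp (- u)) - 1 / u"
    using eventually_gt_at_top[of 0] by eventually_elim (simp add: K_closed)
  show "((\<lambda>u::real. 1/(1 - exp(-u)) - 1/u) \<longlongrightarrow> 1) at_top" by real_asymp
qed

lemma K_bot: "(K \<longlongrightarrow> 0) at_bot"
proof (subst tendsto_cong)
  show "\<forall>\<^sub>F u in at_bot. K u = 1 / (1 - exp (- u)) - 1 / u"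
    using eventually_at_bot_not_equal[of 0] by eventually_elim (simp add: K_closed)
  show "((\<lambda>u::real. 1/(1 - exp(-u)) - 1/u) \<longlongrightarrow> 0) at_bot" by real_asymp
qed




lemma dE_chain: "(f has_real_derivative f') (at x) \<Longrightarrow> ((\<lambda>x. E (f x)) has_real_derivative E1 (f x) * f') (at x)"
  using DERIV_chain2[OF dE] by blast
lemma dE1_chain: "(f has_real_derivative f') (at x) \<Longrightarrow> ((\<lambda>x. E1 (f x)) has_real_derivative E2 (f x) * f') (at x)"
  using DERIV_chain2[OF dE1] by blast
lemma dK_chain: "(f has_real_derivative f') (at x) \<Longrightarrow> ((\<lambda>x. K (f x)) has_real_derivative K1 (f x) * f') (at x)"
  using DERIV_chain2[OF dK] by blast

theorem theorem1:
  fixes a b :: real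
  assumes "0 < a" and "a < b"
  shows "k_log_convex 2 (g_ab a b) UNIV
    \<and> (k_log_convex 3 (g_ab a b) {..<0} \<and> k_log_concave 3 (g_ab a b) {0<..})
    \<and> ((\<forall>t. ((\<lambda>s. ln (g_ab a b s)) has_real_derivative h_ab a b t) (at t))
       \<and> mono (h_ab a b)
       \<and> (h_ab a b \<longlongrightarrow> ln a) at_bot
       \<and> (h_ab a b \<longlongrightarrow> ln b) at_top)"
proof -
  define \<alpha> where "\<alpha> = ln a"
  define c where "c = ln b - ln a"
  have b0: "b > 0" using assms by simp
  have c0: "c > 0" unfolding c_def using assms by simp
  have lnb: "ln b = \<alpha> + c" unfolding c_def \<alpha>_def by simp
  define G where "G = (\<lambda>t. c * exp (\<alpha> * t) * E (c * t))"
  define H where "H = (\<lambda>t. \<alpha> + c * K (c * t))"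
  have g_eq: "g_ab a b = G"
  proof
    fix t show "g_ab a b t = G t"
    proof (cases "t = 0")
      case True thus ?thesis by (simp add: g_ab_def G_def E_def c_def)
    next
      case False
      have "b powr t = exp (\<alpha> * t) * exp (c * t)" using b0 by (simp add: powr_def lnb exp_add[symmetric] algebra_simps)
      moreover have "a powr t = exp (\<alpha> * t)" using assms by (simp add: powr_def \<alpha>_def mult.commute)
      ultimately show ?thesis using False c0 by (simp add: g_ab_def G_def E_def field_simps)
    qed
  qed
  have h_eq: "h_ab a b = H"
  proof
    fix t show "h_ab a b t = H t"
    proof (cases "t = 0")
      case True
      have "ln (sqrt (a * b)) = (ln a + ln b) / 2" using assms b0 by (simp add: ln_sqrt ln_mult)
      thus ?thesis using True by (simp add: h_ab_def H_def K_def E_def E1_def lnb \<alpha>_def[symmetric] field_simps)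
    next
      case False
      have ct: "c * t \<noteq> 0" using False c0 by simp
      have x: "exp (c*t) - 1 \<noteq> 0" using ct by simp
      have "b powr t = exp (\<alpha> * t) * exp (c * t)" using b0 by (simp add: powr_def lnb exp_add[symmetric] algebra_simps)
      moreover have "a powr t = exp (\<alpha> * t)" using assms by (simp add: powr_def \<alpha>_def mult.commute)
      ultimately have "h_ab a b t = (exp (c*t) * (\<alpha> + c) - \<alpha>) / (exp (c*t) - 1) - 1 / t"
        using False x by (simp add: h_ab_def lnb \<alpha>_def[symmetric] field_simps)
      also have "\<dots> = H t" using False x ct c0
        by (simp add: H_def K_def E_def E1_def field_simps power2_eq_square) algebra?
      finally show ?thesis .
    qed
  qed
  define G1 where "G1 = (\<lambda>t. c * (\<alpha> * exp (\<alpha> * t) * E (c * t) + exp (\<alpha> * t) * (E1 (c * t) * c)))"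
  define G2 where "G2 = (\<lambda>t. c * (\<alpha> * (\<alpha> * exp (\<alpha> * t)) * E (c * t) + \<alpha> * exp (\<alpha> * t) * (E1 (c * t) * c)
      + (\<alpha> * exp (\<alpha> * t) * (E1 (c * t) * c) + exp (\<alpha> * t) * (E2 (c * t) * c * c))))"
  define H1 where "H1 = (\<lambda>t. c * (K1 (c * t) * c))"
  have dG: "(G has_real_derivative G1 t) (at t)" for t
    unfolding G_def G1_def
    by (rule derivative_eq_intros dE_chain refl | simp add: algebra_simps)+
  have dG1: "(G1 has_real_derivative G2 t) (at t)" for t
    unfolding G1_def G2_def
    by (rule derivative_eq_intros dE_chain dE1_chain refl | simp add: algebra_simps)+
  have G2d: "G2 differentiable (at t)" if "t \<noteq> 0" for t
  proof -
    have "E2 differentiable (at (c * t))" using E2_diff that c0 by simp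
    hence e2: "(\<lambda>t. E2 (c * t)) differentiable (at t)"
      by (rule differentiable_compose) simp
    have lin: "((\<lambda>t. c * t) has_real_derivative c) (at t)" by (auto intro!: derivative_eq_intros)
    have e1: "(\<lambda>t. E1 (c * t)) differentiable (at t)"
      using dE1_chain[OF lin] unfolding real_differentiable_def by blast
    have e0: "(\<lambda>t. E (c * t)) differentiable (at t)"
      using dE_chain[OF lin] unfolding real_differentiable_def by blast
    have ex: "(\<lambda>t. exp (\<alpha> * t)) differentiable (at t)"
    proof -
      have "((\<lambda>t. exp (\<alpha> * t)) has_real_derivative exp (\<alpha> * t) * \<alpha>) (at t)"
        by (auto intro!: derivative_eq_intros)
      thus ?thesis unfolding real_differentiable_def by blast
    qed
    show ?thesis unfolding G2_def
      using e0 e1 e2 ex by simp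
  qed
  have Gpos: "G t > 0" for t unfolding G_def using c0 E_pos by simp
  have dL: "((\<lambda>s. ln (G s)) has_real_derivative H t) (at t)" for t
  proof -
    have "((\<lambda>s. ln (G s)) has_real_derivative G1 t / G t) (at t)"
      by (rule derivative_eq_intros dG refl | simp add: Gpos)+
    moreover have "G1 t / G t = H t"
      unfolding G1_def G_def H_def K_def using E_pos[of "c*t"] c0 by (simp add: field_simps)
    ultimately show ?thesis by simp
  qed
  have dH: "(H has_real_derivative H1 t) (at t)" for t
    unfolding H_def H1_def
    by (rule derivative_eq_intros dK_chain refl | simp add: algebra_simps)+
  have dH1: "(H1 has_real_derivative c * (K2 (c * t) * c * c)) (at t)" if "t \<noteq> 0" for t
  proof -
    have k1: "(K1 has_real_derivative K2 (c * t)) (at (c * t))" using dK1 that c0 by simp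
    have lin: "((\<lambda>t. c * t) has_real_derivative c) (at t)" by (auto intro!: derivative_eq_intros)
    from DERIV_chain2[OF k1 lin]
    have "((\<lambda>t. K1 (c * t)) has_real_derivative K2 (c * t) * c) (at t)" by simp
    hence "((\<lambda>t. c * (K1 (c * t) * c)) has_real_derivative c * (K2 (c * t) * c * c)) (at t)"
      by (intro DERIV_cmult DERIV_cmult_right)
    thus ?thesis unfolding H1_def .
  qed
  have DG: "deriv G = G1" using dG DERIV_imp_deriv by blast
  have DG1: "deriv G1 = G2" using dG1 DERIV_imp_deriv by blast
  have DL: "deriv (\<lambda>s. ln (G s)) = H" using dL DERIV_imp_deriv by blast
  have DH: "deriv H = H1" using dH DERIV_imp_deriv by blast
  have D2L: "(deriv ^^ 2) (\<lambda>s. ln (G s)) = H1" by (simp add: numeral_2_eq_2 DL DH)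
  have D3L: "(deriv ^^ 3) (\<lambda>s. ln (G s)) t = c * (K2 (c * t) * c * c)" if "t \<noteq> 0" for t
    using DERIV_imp_deriv[OF dH1[OF that]] by (simp add: numeral_3_eq_3 DL DH)
  have diff_all: "(deriv ^^ j) G differentiable (at t)" if "j < 2" for j t
  proof -
    have "j = 0 \<or> j = 1" using that by arith
    thus ?thesis unfolding real_differentiable_def
      by (elim disjE) (auto simp: DG intro: dG dG1)
  qed
  have diff3: "(deriv ^^ j) G differentiable (at t)" if "j < 3" "t \<noteq> 0" for j t
  proof -
    have "j < 2 \<or> j = 2" using that by arith
    thus ?thesis using diff_all G2d[OF that(2)] by (auto simp: numeral_2_eq_2 DG DG1)
  qed
  have P1: "k_log_convex 2 G UNIV"
    unfolding k_log_convex_def k_times_differentiable_on_def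
    using Gpos diff_all D2L K1_nonneg c0 by (simp add: H1_def)
  have P2: "k_log_convex 3 G {..<0}"
    unfolding k_log_convex_def k_times_differentiable_on_def
  proof (intro conjI ballI allI impI)
    fix t :: real assume "t \<in> {..<0}"
    then have t: "t < 0" by simp
    have "c * t < 0" using t c0 by (simp add: mult_pos_neg)
    then have "K2 (c * t) \<ge> 0" by (rule K2_neg)
    thus "0 \<le> (deriv ^^ 3) (\<lambda>s. ln (G s)) t" using D3L[of t] t c0 by simp
  qed (use Gpos diff3 in auto)
  have P3: "k_log_concave 3 G {0<..}"
    unfolding k_log_concave_def k_times_differentiable_on_def
  proof (intro conjI ballI allI impI)
    fix t :: real assume "t \<in> {0<..}"
    then have t: "t > 0" by simp
    have "c * t > 0" using t c0 by simp
    then have "K2 (c * t) \<le> 0" by (rule K2_pos)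
    moreover have "c * (K2 (c * t) * c * c) = (c * c * c) * K2 (c * t)" by simp
    moreover have "c * c * c \<ge> 0" using c0 by simp
    ultimately show "(deriv ^^ 3) (\<lambda>s. ln (G s)) t \<le> 0" using D3L[of t] t
      by (metis less_irrefl mult_nonneg_nonpos)
  qed (use Gpos diff3 in auto)
  have P4: "mono H"
    unfolding H_def mono_def using K_mono c0 by (simp add: mult_left_mono)
  have top: "filterlim (\<lambda>t. c * t) at_top at_top"
    by (rule filterlim_tendsto_pos_mult_at_top[OF tendsto_const c0 filterlim_ident])
  have P5: "(H \<longlongrightarrow> \<alpha> + c) at_top"
  proof -
    have "((\<lambda>t. K (c * t)) \<longlongrightarrow> 1) at_top" by (rule filterlim_compose[OF K_top top])
    hence "((\<lambda>t. \<alpha> + c * K (c * t)) \<longlongrightarrow> \<alpha> + c * 1) at_top" by (intro tendsto_intros)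
    thus ?thesis unfolding H_def by simp
  qed
  have P6: "(H \<longlongrightarrow> \<alpha>) at_bot"
  proof -
    have "((\<lambda>u. K (- u)) \<longlongrightarrow> 0) at_top" using K_bot by (simp add: filterlim_at_bot_mirror)
    hence "((\<lambda>t. K (- (c * t))) \<longlongrightarrow> 0) at_top" by (rule filterlim_compose[OF _ top])
    hence "((\<lambda>t. K (c * t)) \<longlongrightarrow> 0) at_bot" by (simp add: filterlim_at_bot_mirror)
    hence "((\<lambda>t. \<alpha> + c * K (c * t)) \<longlongrightarrow> \<alpha> + c * 0) at_bot" by (intro tendsto_intros)
    thus ?thesis unfolding H_def by simp
  qed
  show ?thesis unfolding g_eq h_eq
    using P1 P2 P3 P4 P5 P6 dL by (simp add: lnb \<alpha>_def)
qed

end
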